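(* (1) $\mathcal{K}^{\mathsf{TJ}}(\overline{K_n})=\{k:k\ge2\}$ for $n\ge2$. (2) $\mathcal{K}^{\mathsf{TJ}}(\overline{K_{1,n}})=\{k:k\ge2\}$ for $n\ge1$. (3) $\mathcal{K}^{\mathsf{TJ}}(\overline{K_{m,n}})=\{k:k\ge2\}$ for $2\le m\le n$. (4) $\mathcal{K}^{\mathsf{TJ}}(\overline{B_p})=\{k:k\ge2\}$ for $p\ge1$. (5) $\mathcal{K}^{\mathsf{TJ}}(\overline{P_n})=\{k:k\ge2\}$ for $3\le n\le5$, and $=\varnothing$ for $n\ge6$. (6) $\mathcal{K}^{\mathsf{TJ}}(\overline{C_n})=\{k:k\ge2\}$ for $4\le n\le6$, and $=\varnothing$ for $n\ge7$. (7) $\mathcal{K}^{\mathsf{TJ}}(\overline{F_p})=\{k:k\ge2\}$ for $p\in\{1,2\}$, $\mathcal{K}^{\mathsf{TJ}}(\overline{F_3})=\{2\}$, and $\mathcal{K}^{\mathsf{TJ}}(\overline{F_p})=\varnothing$ for $p\ge4$.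
   Context: All graphs are finite, simple, undirected; $\overline{G}$ denotes the complement of $G$. A $k$-clique of a graph $H$ is a set of $k$ pairwise adjacent vertices. For a graph $H$ and integer $k\ge1$, the Token Jumping graph $\mathsf{TJ}_k(H)$ has as vertices the $k$-cliques of $H$, and two $k$-cliques $A,B$ are adjacent iff $|A\cap B|=k-1$. For a graph $G$, $\mathcal{K}^{\mathsf{TJ}}(G)=\{k\ge1:\ \exists H,\ \mathsf{TJ}_k(H)\cong G\}$. $K_n$, $P_n$, $C_n$ denote the complete graph, path, cycle on $n$ vertices; $K_{m,n}$ the complete bipartite graph. The book graph $B_p$ consists of $p$ triangles sharing a common edge; the friendship graph $F_p$ consists of $p$ triangles sharing a common vertex. *)

theory Defs
  imports Main
begin

type_synonym 'a graph = "'a set \<times> ('a \<Rightarrow> 'a \<Rightarrow> bool)"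

definition verts :: "'a graph \<Rightarrow> 'a set" where "verts G = fst G"
definition adj :: "'a graph \<Rightarrow> 'a \<Rightarrow> 'a \<Rightarrow> bool" where "adj G = snd G"

definition simple_graph :: "'a graph \<Rightarrow> bool" where
  "simple_graph G \<longleftrightarrow> finite (verts G)
     \<and> (\<forall>x y. adj G x y \<longrightarrow> x \<in> verts G \<and> y \<in> verts G)
     \<and> (\<forall>x y. adj G x y \<longrightarrow> adj G y x)
     \<and> (\<forall>x. \<not> adj G x x)"

definition graph_iso :: "'a graph \<Rightarrow> 'b graph \<Rightarrow> bool" where
  "graph_iso G G' \<longleftrightarrow> (\<exists>f. bij_betw f (verts G) (verts G')
     \<and> (\<forall>x\<in>verts G. \<forall>y\<in>verts G. adj G x y \<longleftrightarrow> adj G' (f x) (f y)))"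

definition compl_graph :: "'a graph \<Rightarrow> 'a graph" where
  "compl_graph G = (verts G, \<lambda>x y. x \<in> verts G \<and> y \<in> verts G \<and> x \<noteq> y \<and> \<not> adj G x y)"

definition clique :: "'a graph \<Rightarrow> nat \<Rightarrow> 'a set \<Rightarrow> bool" where
  "clique H k A \<longleftrightarrow> A \<subseteq> verts H \<and> card A = k \<and> finite A
     \<and> (\<forall>x\<in>A. \<forall>y\<in>A. x \<noteq> y \<longrightarrow> adj H x y)"

definition TJ :: "nat \<Rightarrow> 'a graph \<Rightarrow> 'a set graph" where
  "TJ k H = ({A. clique H k A},
     \<lambda>A B. clique H k A \<and> clique H k B \<and> card (A \<inter> B) = k - 1)"

text \<open>K^TJ(G) = {k \<ge> 1 | exists H with TJ_k(H) \<cong> G}.  H ranges over finite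
  simple graphs with vertices in nat (every finite graph is isomorphic to one).\<close>
definition K_TJ :: "'b graph \<Rightarrow> nat set" where
  "K_TJ G = {k. k \<ge> 1 \<and> (\<exists>H :: nat graph. simple_graph H \<and> graph_iso (TJ k H) G)}"

definition complete_graph :: "nat \<Rightarrow> nat graph" where
  "complete_graph n = ({0..<n}, \<lambda>x y. x < n \<and> y < n \<and> x \<noteq> y)"

definition complete_bipartite :: "nat \<Rightarrow> nat \<Rightarrow> nat graph" where
  "complete_bipartite m n = ({0..<m+n}, \<lambda>x y. x < m+n \<and> y < m+n \<and> (x < m \<longleftrightarrow> m \<le> y))"

definition path_graph :: "nat \<Rightarrow> nat graph" where
  "path_graph n = ({0..<n}, \<lambda>x y. x < n \<and> y < n \<and> (x = y + 1 \<or> y = x + 1))"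

definition cycle_graph :: "nat \<Rightarrow> nat graph" where
  "cycle_graph n = ({0..<n}, \<lambda>x y. x < n \<and> y < n \<and>
     (x = y + 1 \<or> y = x + 1 \<or> (x = 0 \<and> y = n - 1) \<or> (y = 0 \<and> x = n - 1)))"

text \<open>Book graph B_p: spine edge {0,1}, page vertices 2..p+1 adjacent to 0 and 1.\<close>
definition book_graph :: "nat \<Rightarrow> nat graph" where
  "book_graph p = ({0..<p+2}, \<lambda>x y. x < p+2 \<and> y < p+2 \<and> x \<noteq> y \<and> (x \<le> 1 \<or> y \<le> 1))"

text \<open>Friendship graph F_p: centre 0, triangles {0, 2i-1, 2i} for i = 1..p.\<close>
definition friendship_graph :: "nat \<Rightarrow> nat graph" where
  "friendship_graph p = ({0..<2*p+1}, \<lambda>x y. x < 2*p+1 \<and> y < 2*p+1 \<and> x \<noteq> y \<and>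
     (x = 0 \<or> y = 0 \<or> (x - 1) div 2 = (y - 1) div 2))"

end

theory Submission
  imports Defs
begin


lemma TJ_verts[simp]: "verts (TJ k H) = {A. clique H k A}" by (simp add: TJ_def verts_def)
lemma TJ_adj[simp]: "adj (TJ k H) A B = (clique H k A \<and> clique H k B \<and> card (A \<inter> B) = k - 1)"
  by (simp add: TJ_def adj_def)

lemma iso_inv:
  assumes "graph_iso (TJ k H) G"
  obtains g where "\<And>u. u \<in> verts G \<Longrightarrow> clique H k (g u)" "inj_on g (verts G)"
    "\<And>u v. u \<in> verts G \<Longrightarrow> v \<in> verts G \<Longrightarrow> adj G u v \<longleftrightarrow> card (g u \<inter> g v) = k - 1"
    "\<And>A. clique H k A \<Longrightarrow> \<exists>u\<in>verts G. g u = A"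
proof -
  from assms obtain f where bij: "bij_betw f {A. clique H k A} (verts G)"
    and ad: "\<forall>x\<in>{A. clique H k A}. \<forall>y\<in>{A. clique H k A}. adj (TJ k H) x y \<longleftrightarrow> adj G (f x) (f y)"
    unfolding graph_iso_def by auto
  define g where "g = inv_into {A. clique H k A} f"
  have bg: "bij_betw g (verts G) {A. clique H k A}" unfolding g_def using bij by (rule bij_betw_inv_into)
  have fg: "\<And>u. u \<in> verts G \<Longrightarrow> f (g u) = u" unfolding g_def using bij
    by (meson bij_betw_inv_into_right)
  show ?thesis
  proof
    show c: "\<And>u. u \<in> verts G \<Longrightarrow> clique H k (g u)" using bg bij_betwE by blast
    show "inj_on g (verts G)" using bg bij_betw_def by blast
    show "\<And>u v. u \<in> verts G \<Longrightarrow> v \<in> verts G \<Longrightarrow> adj G u v \<longleftrightarrow> card (g u \<inter> g v) = k - 1"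
    proof -
      fix u v assume u: "u \<in> verts G" and v: "v \<in> verts G"
      have "adj (TJ k H) (g u) (g v) \<longleftrightarrow> adj G (f (g u)) (f (g v))" using ad c u v by auto
      then show "adj G u v \<longleftrightarrow> card (g u \<inter> g v) = k - 1" using fg u v c by auto
    qed
    show "\<And>A. clique H k A \<Longrightarrow> \<exists>u\<in>verts G. g u = A" using bg
      by (metis bij_betw_iff_bijections mem_Collect_eq)
  qed
qed

lemma no_k1:
  assumes "u \<in> verts G" "v \<in> verts G" "u \<noteq> v" "\<not> adj G u v"
  shows "1 \<notin> K_TJ G"
proof
  assume "1 \<in> K_TJ G"
  then obtain H :: "nat graph" where "graph_iso (TJ 1 H) G" unfolding K_TJ_def by auto
  then obtain g where c: "\<And>u. u \<in> verts G \<Longrightarrow> clique H 1 (g u)" and i: "inj_on g (verts G)"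
    and a: "\<And>u v. u \<in> verts G \<Longrightarrow> v \<in> verts G \<Longrightarrow> adj G u v \<longleftrightarrow> card (g u \<inter> g v) = 1 - 1"
    by (rule iso_inv, blast)
  have "g u \<noteq> g v" using i assms by (meson inj_on_def)
  moreover obtain x where "g u = {x}" using c[OF assms(1)] unfolding clique_def by (auto simp: card_1_singleton_iff)
  moreover obtain y where "g v = {y}" using c[OF assms(2)] unfolding clique_def by (auto simp: card_1_singleton_iff)
  ultimately have "card (g u \<inter> g v) = 0" by auto
  with a assms show False by auto
qed




lemma card_Diff_eq: "finite a \<Longrightarrow> card (a - b) = card a - card (a \<inter> b)"
  by (metis card_Diff_subset_Int finite_Int Diff_Int2 inf.cobounded1 Int_commute card_Diff_subset Diff_Int_distrib2 Int_Diff)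

lemma rep:
  fixes a b x :: "'a set"
  assumes fa: "finite a" and fb: "finite b" and fx: "finite x"
    and ca: "card a = k" and cb: "card b = k" and cx: "card x = k"
    and ab: "a \<noteq> b" and nab: "card (a \<inter> b) \<noteq> k - 1"
    and xa: "card (x \<inter> a) = k - 1" and xb: "card (x \<inter> b) = k - 1"
  shows "card (a - b) = 2 \<and> card (b - a) = 2 \<and> (\<exists>p q. p \<in> a - b \<and> q \<in> b - a \<and> x = (a \<inter> b) \<union> {p, q})"
proof -
  have k1: "k \<ge> 1" using ca ab cb fa fb by (metis card_0_eq le_less_linear less_one)
  have ile: "card (a \<inter> b) \<le> k" using ca fa by (metis card_mono inf.cobounded1)
  have "card (a \<inter> b) \<noteq> k"
  proof
    assume "card (a \<inter> b) = k"
    then have "a \<inter> b = a" "a \<inter> b = b" using ca cb fa fb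
      by (metis card_subset_eq inf.cobounded1, metis card_subset_eq inf.cobounded2 )
    with ab show False by auto
  qed
  with ile nab k1 have amb: "card (a - b) \<ge> 2" using card_Diff_eq[OF fa, of b] ca by linarith
  have bma: "card (b - a) \<ge> 2" using card_Diff_eq[OF fb, of a] cb amb card_Diff_eq[OF fa, of b] ca
    by (simp add: Int_commute)
  have ax: "card (a - x) = 1" using card_Diff_eq[OF fa, of x] ca xa k1 by (simp add: Int_commute)
  have bx: "card (b - x) = 1" using card_Diff_eq[OF fb, of x] cb xb k1 by (simp add: Int_commute)
  have xa': "card (x - a) = 1" using card_Diff_eq[OF fx, of a] cx xa k1 by simp
  have xb': "card (x - b) = 1" using card_Diff_eq[OF fx, of b] cx xb k1 by simp
  have sub1: "a - b \<subseteq> (a - x) \<union> (x - b)" by auto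
  have sub2: "b - a \<subseteq> (b - x) \<union> (x - a)" by auto
  have "card (a - b) \<le> card (a - x) + card (x - b)"
    by (meson card_Un_le card_mono dual_order.trans finite_Diff finite_UnI fa fx sub1)
  with amb ax xb' have c2: "card (a - b) = 2" by simp
  have "card (b - a) \<le> card (b - x) + card (x - a)"
    by (meson card_Un_le card_mono dual_order.trans finite_Diff finite_UnI fb fx sub2)
  with bma bx xa' have c2': "card (b - a) = 2" by simp
  obtain p where p: "x - b = {p}" using xb' by (auto simp: card_1_singleton_iff)
  obtain q where q: "x - a = {q}" using xa' by (auto simp: card_1_singleton_iff)
  obtain r where r: "a - x = {r}" using ax by (auto simp: card_1_singleton_iff)
  obtain s where s: "b - x = {s}" using bx by (auto simp: card_1_singleton_iff)
  have le1: "\<And>z. a - b \<subseteq> {z} \<Longrightarrow> False"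
  proof -
    fix z assume "a - b \<subseteq> {z}"
    then have "card (a - b) \<le> 1" by (metis card.empty card.insert card_mono empty_iff finite.intros one_le_numeral order_refl le_numeral_extra(4) One_nat_def)
    with c2 show False by simp
  qed
  have le1': "\<And>z. b - a \<subseteq> {z} \<Longrightarrow> False"
  proof -
    fix z assume "b - a \<subseteq> {z}"
    then have "card (b - a) \<le> 1" by (metis card.empty card.insert card_mono empty_iff finite.intros one_le_numeral order_refl le_numeral_extra(4) One_nat_def)
    with c2' show False by simp
  qed
  have T: "a \<inter> b \<subseteq> x"
  proof
    fix e assume e: "e \<in> a \<inter> b"
    show "e \<in> x"
    proof (rule ccontr)
      assume "e \<notin> x"
      then have "e = r" using e r by auto
      then have "a - b \<subseteq> {p}" using sub1 p r e by auto
      then show False by (rule le1)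
    qed
  qed
  have pa: "p \<in> a"
  proof (rule ccontr)
    assume "p \<notin> a"
    then have "a - b \<subseteq> {r}" using sub1 p r by auto
    then show False by (rule le1)
  qed
  have qb: "q \<in> b"
  proof (rule ccontr)
    assume "q \<notin> b"
    then have "b - a \<subseteq> {s}" using sub2 q s by auto
    then show False by (rule le1')
  qed
  have "x = (a \<inter> b) \<union> {p, q}" using T p q pa qb by blast
  moreover have "p \<in> a - b" "q \<in> b - a" using p q pa qb by auto
  ultimately show ?thesis using c2 c2' by blast
qed




lemma int_formula:
  assumes "finite T" "p \<notin> T" "q \<notin> T" "p' \<notin> T" "q' \<notin> T" "p \<noteq> q'" "q \<noteq> p'" "p \<noteq> q" "p' \<noteq> q'"
  shows "card ((T \<union> {p, q}) \<inter> (T \<union> {p', q'})) = card T + (if p = p' then 1 else 0) + (if q = q' then 1 else 0)"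
proof -
  have e: "(T \<union> {p, q}) \<inter> (T \<union> {p', q'}) = T \<union> ((if p = p' then {p} else {}) \<union> (if q = q' then {q} else {}))"
    using assms by auto
  show ?thesis unfolding e using assms by (cases "p = p'"; cases "q = q'"; simp)
qed

lemma two_elem: "card S = 2 \<Longrightarrow> x \<in> S \<Longrightarrow> y \<in> S \<Longrightarrow> z \<in> S \<Longrightarrow> y \<noteq> x \<Longrightarrow> y \<noteq> z \<Longrightarrow> x = z"
  by (auto simp: card_2_iff)

definition nbr :: "nat \<Rightarrow> 'a set \<Rightarrow> 'a set \<Rightarrow> 'a set \<Rightarrow> bool" where
  "nbr k a b x \<longleftrightarrow> finite x \<and> card x = k \<and> card (x \<inter> a) = k - 1 \<and> card (x \<inter> b) = k - 1"

locale nonadj =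
  fixes k :: nat and a b :: "'a set"
  assumes fa: "finite a" and fb: "finite b" and ca: "card a = k" and cb: "card b = k"
    and ab: "a \<noteq> b" and nab: "card (a \<inter> b) \<noteq> k - 1"
begin

lemma repn:
  assumes "nbr k a b x"
  shows "card (a - b) = 2 \<and> card (b - a) = 2 \<and> (\<exists>p q. p \<in> a - b \<and> q \<in> b - a \<and> x = (a \<inter> b) \<union> {p, q})"
  using rep[OF fa fb _ ca cb _ ab nab] assms unfolding nbr_def by blast

lemma cardT:
  assumes "nbr k a b x"
  shows "card (a \<inter> b) + 2 = k" "k \<ge> 2"
proof -
  have "card (a - b) = 2" using repn[OF assms] by blast
  moreover have "card a = card (a \<inter> b) + card (a - b)" using fa
    by (metis card_Un_disjoint Int_Diff_Un Int_Diff_disjoint finite_Int finite_Diff)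
  ultimately show "card (a \<inter> b) + 2 = k" "k \<ge> 2" using ca by auto
qed

lemma L2:
  assumes nx: "nbr k a b x" and ny: "nbr k a b y" and nz: "nbr k a b z"
    and xz: "x \<noteq> z" and yx: "y \<noteq> x" and yz: "y \<noteq> z"
    and a1: "card (y \<inter> x) \<noteq> k - 1" and a2: "card (y \<inter> z) \<noteq> k - 1"
  shows False
proof -
  obtain px qx where x: "px \<in> a - b" "qx \<in> b - a" "x = (a \<inter> b) \<union> {px, qx}" using repn[OF nx] by blast
  obtain py qy where y: "py \<in> a - b" "qy \<in> b - a" "y = (a \<inter> b) \<union> {py, qy}" using repn[OF ny] by blast
  obtain pz qz where z: "pz \<in> a - b" "qz \<in> b - a" "z = (a \<inter> b) \<union> {pz, qz}" using repn[OF nz] by blast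
  have c2: "card (a - b) = 2" "card (b - a) = 2" using repn[OF nx] by auto
  have T: "card (a \<inter> b) + 2 = k" using cardT[OF nx] by auto
  have fT: "finite (a \<inter> b)" using fa by auto
  have f1: "card (y \<inter> x) = card (a \<inter> b) + (if py = px then 1 else 0) + (if qy = qx then 1 else 0)"
    unfolding x(3) y(3) by (rule int_formula[OF fT]) (use x y in auto)
  have f2: "card (y \<inter> z) = card (a \<inter> b) + (if py = pz then 1 else 0) + (if qy = qz then 1 else 0)"
    unfolding z(3) y(3) by (rule int_formula[OF fT]) (use z y in auto)
  have "py \<noteq> px \<and> qy \<noteq> qx" using f1 a1 T yx x y by (auto split: if_splits)
  moreover have "py \<noteq> pz \<and> qy \<noteq> qz" using f2 a2 T yz z y by (auto split: if_splits)
  ultimately have "px = pz" "qx = qz" using x y z c2 two_elem by metis+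
  then show False using x z xz by auto
qed

lemma L1:
  assumes n: "\<And>x. x \<in> X \<Longrightarrow> nbr k a b x"
  shows "card X \<le> 4"
proof -
  have "X \<subseteq> (\<lambda>(p, q). (a \<inter> b) \<union> {p, q}) ` ((a - b) \<times> (b - a))"
  proof
    fix x assume "x \<in> X"
    then obtain p q where "p \<in> a - b" "q \<in> b - a" "x = (a \<inter> b) \<union> {p, q}" using repn[OF n] by blast
    then show "x \<in> (\<lambda>(p, q). (a \<inter> b) \<union> {p, q}) ` ((a - b) \<times> (b - a))" by force
  qed
  then have "card X \<le> card ((\<lambda>(p, q). (a \<inter> b) \<union> {p, q}) ` ((a - b) \<times> (b - a)))"
    by (intro card_mono) (use fa fb in auto)
  also have "\<dots> \<le> card ((a - b) \<times> (b - a))" by (rule card_image_le) (use fa fb in auto)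
  finally have le: "card X \<le> card ((a - b) \<times> (b - a))" .
  show ?thesis
  proof (cases "X = {}")
    case False
    then obtain x where "x \<in> X" by auto
    then have "card ((a - b) \<times> (b - a)) = 4"
      using repn[OF n] by (simp add: card_cartesian_product)
    with le show ?thesis by simp
  qed simp
qed

end



lemma setup_nonadj:
  assumes "graph_iso (TJ k H) G" 
  obtains g where "\<And>u. u \<in> verts G \<Longrightarrow> clique H k (g u)" "inj_on g (verts G)"
    "\<And>u v. u \<in> verts G \<Longrightarrow> v \<in> verts G \<Longrightarrow> adj G u v \<longleftrightarrow> card (g u \<inter> g v) = k - 1"
    "\<And>A. clique H k A \<Longrightarrow> \<exists>u\<in>verts G. g u = A"
    "\<And>a b. a \<in> verts G \<Longrightarrow> b \<in> verts G \<Longrightarrow> a \<noteq> b \<Longrightarrow> \<not> adj G a b \<Longrightarrow> nonadj k (g a) (g b)"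
    "\<And>a b x. a \<in> verts G \<Longrightarrow> b \<in> verts G \<Longrightarrow> x \<in> verts G \<Longrightarrow> adj G x a \<Longrightarrow> adj G x b \<Longrightarrow> nbr k (g a) (g b) (g x)"
proof -
  obtain g where c: "\<And>u. u \<in> verts G \<Longrightarrow> clique H k (g u)" and i: "inj_on g (verts G)"
    and ad: "\<And>u v. u \<in> verts G \<Longrightarrow> v \<in> verts G \<Longrightarrow> adj G u v \<longleftrightarrow> card (g u \<inter> g v) = k - 1"
    and s: "\<And>A. clique H k A \<Longrightarrow> \<exists>u\<in>verts G. g u = A"
    using assms by (rule iso_inv, blast)
  show ?thesis
  proof (rule that[OF c i ad s])
    fix a b assume "a \<in> verts G" "b \<in> verts G" "a \<noteq> b" "\<not> adj G a b"
    then show "nonadj k (g a) (g b)" unfolding nonadj_def using c[of a] c[of b] ad[of a b] i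
      by (auto simp: clique_def inj_on_def)
  next
    fix a b x assume "a \<in> verts G" "b \<in> verts G" "x \<in> verts G" "adj G x a" "adj G x b"
    then show "nbr k (g a) (g b) (g x)" unfolding nbr_def using c[of x] ad[of x a] ad[of x b]
      by (auto simp: clique_def)
  qed
qed

lemma negA:
  assumes V: "a \<in> verts G" "b \<in> verts G" "x \<in> verts G" "y \<in> verts G" "z \<in> verts G"
    and "a \<noteq> b" "\<not> adj G a b" "x \<noteq> z" "y \<noteq> x" "y \<noteq> z"
    and "adj G x a" "adj G x b" "adj G y a" "adj G y b" "adj G z a" "adj G z b"
    and "\<not> adj G y x" "\<not> adj G y z"
  shows "K_TJ G = {}"
proof (rule ccontr)
  assume "K_TJ G \<noteq> {}"
  then obtain k and H :: "nat graph" where "graph_iso (TJ k H) G" unfolding K_TJ_def by auto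
  then obtain g where "\<And>u. u \<in> verts G \<Longrightarrow> clique H k (g u)" and i: "inj_on g (verts G)"
    and ad: "\<And>u v. u \<in> verts G \<Longrightarrow> v \<in> verts G \<Longrightarrow> adj G u v \<longleftrightarrow> card (g u \<inter> g v) = k - 1"
    and "\<And>A. clique H k A \<Longrightarrow> \<exists>u\<in>verts G. g u = A"
    and na: "\<And>a b. a \<in> verts G \<Longrightarrow> b \<in> verts G \<Longrightarrow> a \<noteq> b \<Longrightarrow> \<not> adj G a b \<Longrightarrow> nonadj k (g a) (g b)"
    and nb: "\<And>a b x. a \<in> verts G \<Longrightarrow> b \<in> verts G \<Longrightarrow> x \<in> verts G \<Longrightarrow> adj G x a \<Longrightarrow> adj G x b \<Longrightarrow> nbr k (g a) (g b) (g x)"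
    by (erule setup_nonadj)
  interpret nonadj k "g a" "g b" using na assms by blast
  show False
  proof (rule L2)
    show "nbr k (g a) (g b) (g x)" "nbr k (g a) (g b) (g y)" "nbr k (g a) (g b) (g z)" using nb assms by blast+
    show "g x \<noteq> g z" "g y \<noteq> g x" "g y \<noteq> g z" using i assms by (metis inj_on_def)+
    show "card (g y \<inter> g x) \<noteq> k - 1" "card (g y \<inter> g z) \<noteq> k - 1" using ad assms by blast+
  qed
qed

lemma negB:
  assumes V: "a \<in> verts G" "b \<in> verts G" "X \<subseteq> verts G" "finite X" "card X \<ge> 5"
    and "a \<noteq> b" "\<not> adj G a b" 
    and "\<And>x. x \<in> X \<Longrightarrow> adj G x a \<and> adj G x b"
  shows "K_TJ G = {}"
proof (rule ccontr)
  assume "K_TJ G \<noteq> {}"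
  then obtain k and H :: "nat graph" where "graph_iso (TJ k H) G" unfolding K_TJ_def by auto
  then obtain g where "\<And>u. u \<in> verts G \<Longrightarrow> clique H k (g u)" and i: "inj_on g (verts G)"
    and "\<And>u v. u \<in> verts G \<Longrightarrow> v \<in> verts G \<Longrightarrow> adj G u v \<longleftrightarrow> card (g u \<inter> g v) = k - 1"
    and "\<And>A. clique H k A \<Longrightarrow> \<exists>u\<in>verts G. g u = A"
    and na: "\<And>a b. a \<in> verts G \<Longrightarrow> b \<in> verts G \<Longrightarrow> a \<noteq> b \<Longrightarrow> \<not> adj G a b \<Longrightarrow> nonadj k (g a) (g b)"
    and nb: "\<And>a b x. a \<in> verts G \<Longrightarrow> b \<in> verts G \<Longrightarrow> x \<in> verts G \<Longrightarrow> adj G x a \<Longrightarrow> adj G x b \<Longrightarrow> nbr k (g a) (g b) (g x)"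
    by (erule setup_nonadj)
  interpret nonadj k "g a" "g b" using na assms by blast
  have "card (g ` X) \<le> 4" by (rule L1) (use nb assms in blast)
  moreover have "card (g ` X) = card X" using i assms by (meson card_image inj_on_subset)
  ultimately show False using assms by simp
qed




lemma two_eq: "card S = 2 \<Longrightarrow> x \<in> S \<Longrightarrow> y \<in> S \<Longrightarrow> x \<noteq> y \<Longrightarrow> S = {x, y}"
  by (auto simp: card_2_iff)

lemma negOct:
  assumes V: "a \<in> verts G" "b \<in> verts G" "c \<in> verts G" "d \<in> verts G"
    and "a \<noteq> b" "\<not> adj G a b" "adj G c a" "adj G c b" "adj G d a" "adj G d b" "adj G c d"
    and cl: "\<And>w. w \<in> verts G \<Longrightarrow> adj G w c \<Longrightarrow> w = a \<or> w = b \<or> (adj G w a \<and> adj G w b)"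
    and k: "k \<in> K_TJ G"
  shows "k \<le> 2"
proof (rule ccontr)
  assume k3: "\<not> k \<le> 2"
  from k obtain H :: "nat graph" where "graph_iso (TJ k H) G" unfolding K_TJ_def by auto
  then obtain g where cq: "\<And>u. u \<in> verts G \<Longrightarrow> clique H k (g u)" and i: "inj_on g (verts G)"
    and ad: "\<And>u v. u \<in> verts G \<Longrightarrow> v \<in> verts G \<Longrightarrow> adj G u v \<longleftrightarrow> card (g u \<inter> g v) = k - 1"
    and sur: "\<And>A. clique H k A \<Longrightarrow> \<exists>u\<in>verts G. g u = A"
    and na: "\<And>a b. a \<in> verts G \<Longrightarrow> b \<in> verts G \<Longrightarrow> a \<noteq> b \<Longrightarrow> \<not> adj G a b \<Longrightarrow> nonadj k (g a) (g b)"
    and nb: "\<And>a b x. a \<in> verts G \<Longrightarrow> b \<in> verts G \<Longrightarrow> x \<in> verts G \<Longrightarrow> adj G x a \<Longrightarrow> adj G x b \<Longrightarrow> nbr k (g a) (g b) (g x)"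
    by (erule setup_nonadj)
  interpret nonadj k "g a" "g b" using na assms by blast
  define A where "A = g a"
  define B where "B = g b"
  define T where "T = A \<inter> B"
  have nc: "nbr k A B (g c)" and nd: "nbr k A B (g d)" using nb assms unfolding A_def B_def by blast+
  obtain pc qc where C: "pc \<in> A - B" "qc \<in> B - A" "g c = T \<union> {pc, qc}" using repn nc unfolding T_def A_def B_def by blast
  obtain pd qd where D: "pd \<in> A - B" "qd \<in> B - A" "g d = T \<union> {pd, qd}" using repn nd unfolding T_def A_def B_def by blast
  have c2: "card (A - B) = 2" "card (B - A) = 2" using repn nc unfolding A_def B_def by auto
  have cT: "card T + 2 = k" using cardT nc unfolding T_def A_def B_def by auto
  have fT: "finite T" unfolding T_def A_def using fa by auto
  have "card (g c \<inter> g d) = card T + (if pc = pd then 1 else 0) + (if qc = qd then 1 else 0)"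
    unfolding C(3) D(3) by (rule int_formula[OF fT]) (use C D T_def in auto)
  moreover have "card (g c \<inter> g d) = k - 1" using ad assms by blast
  ultimately have one: "(pc = pd \<and> qc \<noteq> qd) \<or> (pc \<noteq> pd \<and> qc = qd)" using cT by (auto split: if_splits)
  have "T \<noteq> {}" using cT k3 by auto
  then obtain t where t: "t \<in> T" by auto
  define U where "U = g c \<union> g d"
  have cqc: "clique H k (g c)" and cqd: "clique H k (g d)" and cqa: "clique H k A" and cqb: "clique H k B"
    using cq V unfolding A_def B_def by auto
  have Usub: "U \<subseteq> verts H" using cqc cqd unfolding U_def clique_def by auto
  have Uadj: "\<forall>x\<in>U. \<forall>y\<in>U. x \<noteq> y \<longrightarrow> adj H x y"
  proof (cases "pc = pd")
    case True
    with one have "qc \<noteq> qd" by auto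
    then have Beq: "B = T \<union> {qc, qd}" using two_eq[OF c2(2)] C D unfolding T_def by blast
    have "\<forall>x\<in>U. \<forall>y\<in>U. ({x, y} \<subseteq> g c) \<or> ({x, y} \<subseteq> g d) \<or> ({x, y} \<subseteq> B)"
      unfolding U_def C(3) D(3) Beq True by blast
    then show ?thesis using cqc cqd cqb unfolding clique_def by (metis insert_subset)
  next
    case False
    with one have "qc = qd" by auto
    then have Aeq: "A = T \<union> {pc, pd}" using two_eq[OF c2(1)] C D False unfolding T_def by blast
    have "\<forall>x\<in>U. \<forall>y\<in>U. ({x, y} \<subseteq> g c) \<or> ({x, y} \<subseteq> g d) \<or> ({x, y} \<subseteq> A)"
      unfolding U_def C(3) D(3) Aeq \<open>qc = qd\<close> by blast
    then show ?thesis using cqc cqd cqa unfolding clique_def by (metis insert_subset)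
  qed
  define W where "W = U - {t}"
  have Ueq: "U = T \<union> {pc, qc, pd, qd}" unfolding U_def C(3) D(3) by auto
  have "card U = card T + 3"
  proof (cases "pc = pd")
    case True
    then have "qc \<noteq> qd" using one by auto
    have "U = insert pc (insert qc (insert qd T))" unfolding Ueq True by auto
    moreover have "pc \<notin> insert qc (insert qd T)" "qc \<notin> insert qd T" "qd \<notin> T"
      using C D \<open>qc \<noteq> qd\<close> True unfolding T_def by auto
    ultimately show ?thesis using fT by simp
  next
    case False
    then have "qc = qd" using one by auto
    have "U = insert pc (insert pd (insert qc T))" unfolding Ueq \<open>qc = qd\<close> by auto
    moreover have "pc \<notin> insert pd (insert qc T)" "pd \<notin> insert qc T" "qc \<notin> T"
      using C D False unfolding T_def by auto
    ultimately show ?thesis using fT by simp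
  qed
  moreover have tU: "t \<in> U" unfolding Ueq using t by auto
  moreover have fU: "finite U" unfolding Ueq using fT by auto
  ultimately have cW: "card W = k" unfolding W_def using cT by simp
  have "clique H k W" unfolding clique_def W_def using Usub Uadj cW fU W_def by auto
  then obtain w where w: "w \<in> verts G" "g w = W" using sur by blast
  have "W \<inter> g c = g c - {t}" unfolding W_def U_def by auto
  then have "card (g w \<inter> g c) = k - 1" using w t cqc C(3) unfolding clique_def by auto
  then have "adj G w c" using ad w V by blast
  then have "w = a \<or> w = b \<or> (adj G w a \<and> adj G w b)" using cl w by blast
  then have "T \<subseteq> g w"
  proof (elim disjE)
    assume "adj G w a \<and> adj G w b"
    then have "nbr k A B (g w)" using nb V w unfolding A_def B_def by blast
    then show ?thesis using repn unfolding T_def A_def B_def by blast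
  qed (auto simp: T_def A_def B_def)
  then show False using t w unfolding W_def by auto
qed




lemma iso_from:
  assumes b: "bij_betw F (verts G) {A. clique H k A}"
    and a: "\<And>u v. u \<in> verts G \<Longrightarrow> v \<in> verts G \<Longrightarrow> adj G u v \<longleftrightarrow> card (F u \<inter> F v) = k - 1"
  shows "graph_iso (TJ k H) G"
proof -
  define f where "f = inv_into (verts G) F"
  have bf: "bij_betw f {A. clique H k A} (verts G)" unfolding f_def using b by (rule bij_betw_inv_into)
  have ff: "\<And>A. A \<in> {A. clique H k A} \<Longrightarrow> F (f A) = A" unfolding f_def using b
    by (meson bij_betw_inv_into_right)
  have "\<forall>x\<in>verts (TJ k H). \<forall>y\<in>verts (TJ k H). adj (TJ k H) x y \<longleftrightarrow> adj G (f x) (f y)"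
  proof (intro ballI)
    fix x y assume x: "x \<in> verts (TJ k H)" and y: "y \<in> verts (TJ k H)"
    have "f x \<in> verts G" "f y \<in> verts G" using bf x y by (auto simp: bij_betw_def)
    then have "adj G (f x) (f y) \<longleftrightarrow> card (F (f x) \<inter> F (f y)) = k - 1" by (rule a)
    then show "adj (TJ k H) x y \<longleftrightarrow> adj G (f x) (f y)" using ff x y by auto
  qed
  then show ?thesis unfolding graph_iso_def using bf by auto
qed

lemma three_elems: "finite C \<Longrightarrow> card C \<ge> 3 \<Longrightarrow> \<exists>x y z. x \<in> C \<and> y \<in> C \<and> z \<in> C \<and> x \<noteq> y \<and> y \<noteq> z \<and> x \<noteq> z"
proof -
  assume f: "finite C" and c: "card C \<ge> 3"
  then have "C \<noteq> {}" by (metis card.empty not_numeral_le_zero)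
  then obtain x where x: "x \<in> C" by blast
  have "card (C - {x}) \<ge> 2" using c x f by auto
  then have "C - {x} \<noteq> {}" by (metis card.empty not_numeral_le_zero)
  then obtain y where y: "y \<in> C - {x}" by blast
  have "card (C - {x} - {y}) \<ge> 1" using c x y f by auto
  then have "C - {x} - {y} \<noteq> {}" by (metis card.empty not_one_le_zero)
  then obtain z where z: "z \<in> C - {x} - {y}" by blast
  show ?thesis using x y z by blast
qed

lemma card_dbl: "card ((\<lambda>x::nat. 2 * x) ` A) = card A" by (rule card_image) (auto simp: inj_on_def)
lemma dbl_int: "(\<lambda>x::nat. 2 * x) ` A \<inter> (\<lambda>x. 2 * x) ` B = (\<lambda>x. 2 * x) ` (A \<inter> B)" by auto

lemma pos:
  fixes G :: "'b graph" and \<phi> :: "'b \<Rightarrow> nat set"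
  assumes finV: "finite (verts G)"
    and irr: "\<And>u. u \<in> verts G \<Longrightarrow> \<not> adj G u u"
    and inj: "inj_on \<phi> (verts G)"
    and two: "\<And>v. v \<in> verts G \<Longrightarrow> card (\<phi> v) = 2"
    and adjc: "\<And>u v. u \<in> verts G \<Longrightarrow> v \<in> verts G \<Longrightarrow> u \<noteq> v \<Longrightarrow> adj G u v \<longleftrightarrow> card (\<phi> u \<inter> \<phi> v) = 1"
    and k: "k \<ge> 2"
    and tri: "k = 2 \<or> (\<forall>u\<in>verts G. \<forall>v\<in>verts G. \<forall>w\<in>verts G. u \<noteq> v \<and> v \<noteq> w \<and> u \<noteq> w \<and>
        adj G u v \<and> adj G v w \<and> adj G u w \<longrightarrow> \<phi> u \<inter> \<phi> v \<inter> \<phi> w \<noteq> {})"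
  shows "\<exists>H :: nat graph. simple_graph H \<and> graph_iso (TJ k H) G"
proof -
  define V where "V = verts G"
  define S where "S = (\<lambda>i::nat. 2 * i + 1) ` {..<k-2}"
  define \<psi> where "\<psi> v = (\<lambda>x::nat. 2 * x) ` \<phi> v" for v
  define Hv where "Hv = (\<Union>v\<in>V. \<psi> v) \<union> S"
  define H :: "nat graph" where "H = (Hv, \<lambda>x y. x \<in> Hv \<and> y \<in> Hv \<and> x \<noteq> y \<and> (x \<in> S \<or> y \<in> S \<or> (\<exists>v\<in>V. \<psi> v = {x, y})))"
  define F where "F v = S \<union> \<psi> v" for v
  have vH: "verts H = Hv" unfolding H_def verts_def by simp
  have aH: "adj H x y \<longleftrightarrow> x \<in> Hv \<and> y \<in> Hv \<and> x \<noteq> y \<and> (x \<in> S \<or> y \<in> S \<or> (\<exists>v\<in>V. \<psi> v = {x, y}))" for x y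
    unfolding H_def adj_def by simp
  have fphi: "finite (\<phi> v)" if "v \<in> V" for v using two[of v] that V_def by (metis card.infinite zero_neq_numeral)
  have fS: "finite S" "card S = k - 2" unfolding S_def by (auto simp: card_image inj_on_def)
  have cpsi: "card (\<psi> v) = 2" if "v \<in> V" for v unfolding \<psi>_def card_dbl using two that V_def by auto
  have fpsi: "finite (\<psi> v)" if "v \<in> V" for v unfolding \<psi>_def using fphi that by auto
  have disj: "\<psi> v \<inter> S = {}" for v unfolding \<psi>_def S_def by auto presburger
  have pint: "card (\<psi> u \<inter> \<psi> v) = card (\<phi> u \<inter> \<phi> v)" for u v unfolding \<psi>_def dbl_int card_dbl ..
  have pint3: "\<psi> u \<inter> \<psi> v \<inter> \<psi> w = (\<lambda>x::nat. 2 * x) ` (\<phi> u \<inter> \<phi> v \<inter> \<phi> w)" for u v w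
    unfolding \<psi>_def dbl_int ..
  have fHv: "finite Hv" unfolding Hv_def using finV fpsi fS V_def by auto
  have simple: "simple_graph H" unfolding simple_graph_def vH aH using fHv by (auto simp: insert_commute)
  have cF: "card (F v) = k" if "v \<in> V" for v
    unfolding F_def using fS cpsi[OF that] fpsi[OF that] disj k
    by (simp add: card_Un_disjoint Int_commute)
  have cFF: "card (F u \<inter> F v) = (k - 2) + card (\<phi> u \<inter> \<phi> v)" if "u \<in> V" "v \<in> V" for u v
  proof -
    have "F u \<inter> F v = S \<union> (\<psi> u \<inter> \<psi> v)" unfolding F_def using disj by auto
    moreover have "S \<inter> (\<psi> u \<inter> \<psi> v) = {}" using disj by auto
    ultimately show ?thesis using fS fpsi that pint by (simp add: card_Un_disjoint)
  qed
  have cliqueF: "clique H k (F v)" if "v \<in> V" for v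
  proof -
    have "F v \<subseteq> Hv" unfolding F_def Hv_def using that by auto
    moreover have "\<forall>x\<in>F v. \<forall>y\<in>F v. x \<noteq> y \<longrightarrow> adj H x y"
    proof (intro ballI impI)
      fix x y assume x: "x \<in> F v" and y: "y \<in> F v" and xy: "x \<noteq> y"
      have "x \<in> Hv" "y \<in> Hv" using x y \<open>F v \<subseteq> Hv\<close> by auto
      moreover have "x \<in> S \<or> y \<in> S \<or> \<psi> v = {x, y}"
      proof (cases "x \<in> S \<or> y \<in> S")
        case False
        then have "x \<in> \<psi> v" "y \<in> \<psi> v" using x y unfolding F_def by auto
        then show ?thesis using cpsi[OF that] xy by (auto simp: card_2_iff)
      qed auto
      ultimately show "adj H x y" unfolding aH using xy that by auto
    qed
    ultimately show ?thesis unfolding clique_def vH using cF[OF that] fS fpsi[OF that] F_def by auto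
  qed
  have Fall: "\<exists>v\<in>V. C = F v" if cl: "clique H k C" for C
  proof -
    have CH: "C \<subseteq> Hv" and cC: "card C = k" and fC: "finite C"
      and ca: "\<forall>x\<in>C. \<forall>y\<in>C. x \<noteq> y \<longrightarrow> adj H x y" using cl unfolding clique_def vH by auto
    define Ce where "Ce = C - S"
    have e: "\<exists>v\<in>V. \<psi> v = {x, y}" if "x \<in> Ce" "y \<in> Ce" "x \<noteq> y" for x y
      using ca that unfolding Ce_def aH by auto
    have cCS: "card (C \<inter> S) \<le> k - 2" using fS by (metis card_mono inf.cobounded2)
    have csplit: "card C = card (C \<inter> S) + card Ce" unfolding Ce_def using fC
      by (metis card_Un_disjoint Int_Diff_Un Int_Diff_disjoint finite_Int finite_Diff)
    have ge2: "card Ce \<ge> 2" using cCS csplit cC k by linarith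
    have fCe: "finite Ce" unfolding Ce_def using fC by auto
    have le2: "card Ce \<le> 2"
    proof (rule ccontr)
      assume "\<not> card Ce \<le> 2"
      then have "card Ce \<ge> 3" by simp
      then obtain x y z where xyz: "x \<in> Ce" "y \<in> Ce" "z \<in> Ce" "x \<noteq> y" "y \<noteq> z" "x \<noteq> z"
        using three_elems[OF fCe] by blast
      have "k \<noteq> 2" using \<open>card Ce \<ge> 3\<close> csplit cC by linarith
      with tri have tri': "\<forall>u\<in>V. \<forall>v\<in>V. \<forall>w\<in>V. u \<noteq> v \<and> v \<noteq> w \<and> u \<noteq> w \<and>
        adj G u v \<and> adj G v w \<and> adj G u w \<longrightarrow> \<phi> u \<inter> \<phi> v \<inter> \<phi> w \<noteq> {}" unfolding V_def by blast
      obtain u where u: "u \<in> V" "\<psi> u = {x, y}" using e xyz by blast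
      obtain v where v: "v \<in> V" "\<psi> v = {y, z}" using e xyz by blast
      obtain w where w: "w \<in> V" "\<psi> w = {x, z}" using e xyz by blast
      have d: "u \<noteq> v" "v \<noteq> w" "u \<noteq> w" using u v w xyz by (auto simp: doubleton_eq_iff)
      have i1: "\<psi> u \<inter> \<psi> v = {y}" "\<psi> v \<inter> \<psi> w = {z}" "\<psi> u \<inter> \<psi> w = {x}" using u v w xyz by auto
      have "card (\<phi> u \<inter> \<phi> v) = 1" "card (\<phi> v \<inter> \<phi> w) = 1" "card (\<phi> u \<inter> \<phi> w) = 1"
        using pint[of u v] pint[of v w] pint[of u w] i1 by simp_all
      then have "adj G u v" "adj G v w" "adj G u w" using adjc d u v w unfolding V_def by blast+
      then have "\<phi> u \<inter> \<phi> v \<inter> \<phi> w \<noteq> {}" using tri' u v w d by blast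
      moreover have "\<psi> u \<inter> \<psi> v \<inter> \<psi> w = {}" using u v w xyz by auto
      ultimately show False unfolding pint3 by auto
    qed
    then have "card Ce = 2" using ge2 by simp
    then obtain x y where xy: "Ce = {x, y}" "x \<noteq> y" by (auto simp: card_2_iff)
    then obtain v where v: "v \<in> V" "\<psi> v = {x, y}" using e by blast
    have "card (C \<inter> S) = card S" using csplit cC \<open>card Ce = 2\<close> fS by simp
    then have "C \<inter> S = S" using fS by (metis card_subset_eq inf.cobounded2)
    then have "C = S \<union> Ce" unfolding Ce_def by auto
    then show ?thesis using v xy unfolding F_def by auto
  qed
  have injF: "inj_on F V"
  proof (rule inj_onI)
    fix u v assume u: "u \<in> V" and v: "v \<in> V" and e: "F u = F v"
    have "\<psi> u = F u - S" "\<psi> v = F v - S" unfolding F_def using disj by auto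
    then have "\<psi> u = \<psi> v" using e by simp
    then have "\<phi> u = \<phi> v" unfolding \<psi>_def by (simp add: inj_image_eq_iff inj_on_def)
    then show "u = v" using inj u v unfolding V_def by (meson inj_on_def)
  qed
  have bij: "bij_betw F V {A. clique H k A}"
    unfolding bij_betw_def using injF cliqueF Fall by auto
  have "graph_iso (TJ k H) G"
  proof (rule iso_from)
    show "bij_betw F (verts G) {A. clique H k A}" using bij V_def by simp
    fix u v assume u: "u \<in> verts G" and v: "v \<in> verts G"
    show "adj G u v \<longleftrightarrow> card (F u \<inter> F v) = k - 1"
    proof (cases "u = v")
      case True
      then show ?thesis using irr u cF V_def k by auto
    next
      case False
      then show ?thesis using adjc[OF u v False] cFF u v V_def k by auto
    qed
  qed
  then show ?thesis using simple by blast
qed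




lemma K_pos:
  assumes "\<And>k. k \<ge> 2 \<Longrightarrow> \<exists>H :: nat graph. simple_graph H \<and> graph_iso (TJ k H) G"
    and "u \<in> verts G" "v \<in> verts G" "u \<noteq> v" "\<not> adj G u v"
  shows "K_TJ G = {k. k \<ge> 2}"
proof -
  have n1: "1 \<notin> K_TJ G" by (rule no_k1[OF assms(2-5)])
  show ?thesis
  proof (rule set_eqI)
    fix k
    show "k \<in> K_TJ G \<longleftrightarrow> k \<in> {k. k \<ge> 2}"
    proof
      assume k: "k \<in> K_TJ G"
      then have "k \<ge> 1" unfolding K_TJ_def by simp
      moreover have "k \<noteq> 1" using k n1 by metis
      ultimately show "k \<in> {k. k \<ge> 2}" by simp
    next
      assume "k \<in> {k. k \<ge> 2}"
      then have "k \<ge> 2" by simp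
      then have "\<exists>H :: nat graph. simple_graph H \<and> graph_iso (TJ k H) G" by (rule assms(1))
      then show "k \<in> K_TJ G" using \<open>k \<ge> 2\<close> unfolding K_TJ_def by simp
    qed
  qed
qed
lemma union_cliques:
  fixes G :: "nat graph" and c :: "nat \<Rightarrow> nat"
  assumes finV: "finite (verts G)"
    and irr: "\<And>u. u \<in> verts G \<Longrightarrow> \<not> adj G u u"
    and ac: "\<And>u v. u \<in> verts G \<Longrightarrow> v \<in> verts G \<Longrightarrow> u \<noteq> v \<Longrightarrow> adj G u v \<longleftrightarrow> c u = c v"
    and na: "u \<in> verts G" "v \<in> verts G" "u \<noteq> v" "\<not> adj G u v"
  shows "K_TJ G = {k. k \<ge> 2}"
proof (rule K_pos[OF _ na])
  fix k :: nat assume k: "k \<ge> 2"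
  define \<phi> where "\<phi> v = {2 * c v, 2 * v + 1}" for v
  have par: "2 * a \<noteq> 2 * b + 1" for a b :: nat by presburger
  have int: "\<phi> u \<inter> \<phi> v = (if c u = c v then {2 * c u} else {})" if "u \<noteq> v" for u v
    unfolding \<phi>_def using that par by auto
  show "\<exists>H :: nat graph. simple_graph H \<and> graph_iso (TJ k H) G"
  proof (rule pos[OF finV irr, of \<phi>])
    show "inj_on \<phi> (verts G)"
    proof (rule inj_onI)
      fix x y assume "\<phi> x = \<phi> y"
      then have "2 * x + 1 \<in> \<phi> y" unfolding \<phi>_def by blast
      then have "2 * x + 1 = 2 * c y \<or> 2 * x + 1 = 2 * y + 1" unfolding \<phi>_def by blast
      then show "x = y" using par[of "c y" x] by linarith
    qed
    show "card (\<phi> v) = 2" for v unfolding \<phi>_def using par[of "c v" v] by simp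
    show "u \<in> verts G \<Longrightarrow> v \<in> verts G \<Longrightarrow> u \<noteq> v \<Longrightarrow> adj G u v \<longleftrightarrow> card (\<phi> u \<inter> \<phi> v) = 1" for u v
    proof -
      assume "u \<in> verts G" "v \<in> verts G" "u \<noteq> v"
      then show ?thesis using ac[of u v] int[of u v] by simp
    qed
    show "k \<ge> 2" by fact
    show "k = 2 \<or> (\<forall>u\<in>verts G. \<forall>v\<in>verts G. \<forall>w\<in>verts G. u \<noteq> v \<and> v \<noteq> w \<and> u \<noteq> w \<and>
        adj G u v \<and> adj G v w \<and> adj G u w \<longrightarrow> \<phi> u \<inter> \<phi> v \<inter> \<phi> w \<noteq> {})"
    proof (rule disjI2, intro ballI impI)
      fix x y z assume "x \<in> verts G" "y \<in> verts G" "z \<in> verts G" and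
        h: "x \<noteq> y \<and> y \<noteq> z \<and> x \<noteq> z \<and> adj G x y \<and> adj G y z \<and> adj G x z"
      then have "c x = c y" "c y = c z" using ac by blast+
      then have "2 * c x \<in> \<phi> x \<inter> \<phi> y \<inter> \<phi> z" unfolding \<phi>_def by simp
      then show "\<phi> x \<inter> \<phi> y \<inter> \<phi> z \<noteq> {}" by blast
    qed
  qed (use irr in blast)
qed

lemma compl_verts[simp]: "verts (compl_graph G) = verts G" by (simp add: compl_graph_def verts_def)
lemma compl_adj[simp]: "adj (compl_graph G) x y = (x \<in> verts G \<and> y \<in> verts G \<and> x \<noteq> y \<and> \<not> adj G x y)"
  by (simp add: compl_graph_def verts_def adj_def)

lemma verts_simps[simp]:
  "verts (complete_graph n) = {0..<n}" "verts (complete_bipartite m n) = {0..<m+n}"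
  "verts (path_graph n) = {0..<n}" "verts (cycle_graph n) = {0..<n}"
  "verts (book_graph p) = {0..<p+2}" "verts (friendship_graph p) = {0..<2*p+1}"
  by (simp_all add: verts_def complete_graph_def complete_bipartite_def path_graph_def cycle_graph_def
      book_graph_def friendship_graph_def)

lemma adj_simps[simp]:
  "adj (complete_graph n) x y = (x < n \<and> y < n \<and> x \<noteq> y)"
  "adj (complete_bipartite m n) x y = (x < m+n \<and> y < m+n \<and> (x < m \<longleftrightarrow> m \<le> y))"
  "adj (path_graph n) x y = (x < n \<and> y < n \<and> (x = y + 1 \<or> y = x + 1))"
  "adj (cycle_graph n) x y = (x < n \<and> y < n \<and>
     (x = y + 1 \<or> y = x + 1 \<or> (x = 0 \<and> y = n - 1) \<or> (y = 0 \<and> x = n - 1)))"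
  "adj (book_graph p) x y = (x < p+2 \<and> y < p+2 \<and> x \<noteq> y \<and> (x \<le> 1 \<or> y \<le> 1))"
  "adj (friendship_graph p) x y = (x < 2*p+1 \<and> y < 2*p+1 \<and> x \<noteq> y \<and>
     (x = 0 \<or> y = 0 \<or> (x - 1) div 2 = (y - 1) div 2))"
  by (simp_all add: adj_def complete_graph_def complete_bipartite_def path_graph_def cycle_graph_def
      book_graph_def friendship_graph_def)

lemma fam1: "n \<ge> 2 \<Longrightarrow> K_TJ (compl_graph (complete_graph n)) = {k. k \<ge> 2}"
  by (rule union_cliques[where c = id and u = 0 and v = 1]) auto

lemma fam2: "n \<ge> 1 \<Longrightarrow> K_TJ (compl_graph (complete_bipartite 1 n)) = {k. k \<ge> 2}"
  by (rule union_cliques[where c = "\<lambda>x. if x = 0 then 0 else 1" and u = 0 and v = 1]) auto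

lemma fam3: "2 \<le> m \<Longrightarrow> m \<le> n \<Longrightarrow> K_TJ (compl_graph (complete_bipartite m n)) = {k. k \<ge> 2}"
  by (rule union_cliques[where c = "\<lambda>x. if x < m then 0 else 1" and u = 0 and v = m]) auto

lemma fam4: "p \<ge> 1 \<Longrightarrow> K_TJ (compl_graph (book_graph p)) = {k. k \<ge> 2}"
  by (rule union_cliques[where c = "\<lambda>x. if x \<le> 1 then x else 2" and u = 0 and v = 1]) auto

lemma famP3: "K_TJ (compl_graph (path_graph 3)) = {k. k \<ge> 2}"
  by (rule union_cliques[where c = "\<lambda>x. x mod 2" and u = 0 and v = 1]) (auto simp: eval_nat_numeral less_Suc_eq)

lemma famC4: "K_TJ (compl_graph (cycle_graph 4)) = {k. k \<ge> 2}"
  by (rule union_cliques[where c = "\<lambda>x. if x = 0 \<or> x = 2 then 0 else 1" and u = 0 and v = 1]) (auto simp: eval_nat_numeral less_Suc_eq)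

lemma famF1: "K_TJ (compl_graph (friendship_graph 1)) = {k. k \<ge> 2}"
  by (rule union_cliques[where c = id and u = 0 and v = 1]) auto





lemma upto_expand: "{0..<Suc n} = insert n {0..<n}" by auto

lemma famP4: "K_TJ (compl_graph (path_graph 4)) = {k. k \<ge> 2}"
proof (rule K_pos[where u = 0 and v = 1])
  fix k :: nat assume k: "k \<ge> 2"
  show "\<exists>H :: nat graph. simple_graph H \<and> graph_iso (TJ k H) (compl_graph (path_graph 4))"
    apply (rule pos[where \<phi> = "\<lambda>v. [{1,2},{3,4},{0,1},{2,3}] ! v"])
    using k by (auto simp add: eval_nat_numeral upto_expand inj_on_def Int_insert_left doubleton_eq_iff)
qed auto




lemma d2a: "Suc (Suc m) div Suc (Suc 0) = Suc (m div Suc (Suc 0))" by (metis div2_Suc_Suc numeral_2_eq_2)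
lemma d2b: "Suc 0 div Suc (Suc 0) = 0" by simp

lemma famP5: "K_TJ (compl_graph (path_graph 5)) = {k. k \<ge> 2}"
proof (rule K_pos[where u = 0 and v = 1])
  fix k :: nat assume k: "k \<ge> 2"
  show "\<exists>H :: nat graph. simple_graph H \<and> graph_iso (TJ k H) (compl_graph (path_graph 5))"
    apply (rule pos[where \<phi> = "\<lambda>v. [{0,1},{4,2},{0,3},{1,4},{0,2}] ! v"])
    using k by (auto simp add: eval_nat_numeral upto_expand inj_on_def Int_insert_left doubleton_eq_iff d2a d2b)
qed auto

lemma famC5: "K_TJ (compl_graph (cycle_graph 5)) = {k. k \<ge> 2}"
proof (rule K_pos[where u = 0 and v = 1])
  fix k :: nat assume k: "k \<ge> 2"
  show "\<exists>H :: nat graph. simple_graph H \<and> graph_iso (TJ k H) (compl_graph (cycle_graph 5))"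
    apply (rule pos[where \<phi> = "\<lambda>v. [{0,1},{3,4},{1,2},{4,0},{2,3}] ! v"])
    using k by (auto simp add: eval_nat_numeral upto_expand inj_on_def Int_insert_left doubleton_eq_iff d2a d2b)
qed auto

lemma famC6: "K_TJ (compl_graph (cycle_graph 6)) = {k. k \<ge> 2}"
proof (rule K_pos[where u = 0 and v = 1])
  fix k :: nat assume k: "k \<ge> 2"
  show "\<exists>H :: nat graph. simple_graph H \<and> graph_iso (TJ k H) (compl_graph (cycle_graph 6))"
    apply (rule pos[where \<phi> = "\<lambda>v. [{0,2},{1,4},{0,3},{1,2},{0,4},{1,3}] ! v"])
    using k by (auto simp add: eval_nat_numeral upto_expand inj_on_def Int_insert_left doubleton_eq_iff d2a d2b)
qed auto

lemma famF2: "K_TJ (compl_graph (friendship_graph 2)) = {k. k \<ge> 2}"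
proof (rule K_pos[where u = 0 and v = 1])
  fix k :: nat assume k: "k \<ge> 2"
  show "\<exists>H :: nat graph. simple_graph H \<and> graph_iso (TJ k H) (compl_graph (friendship_graph 2))"
    apply (rule pos[where \<phi> = "\<lambda>v. [{0,1},{2,3},{4,5},{3,4},{5,2}] ! v"])
    using k by (auto simp add: eval_nat_numeral upto_expand inj_on_def Int_insert_left doubleton_eq_iff d2a d2b)
qed auto

lemma famF3: "K_TJ (compl_graph (friendship_graph 3)) = {2}"
proof (rule set_eqI)
  fix k
  let ?G = "compl_graph (friendship_graph 3)"
  have two: "\<exists>H :: nat graph. simple_graph H \<and> graph_iso (TJ 2 H) ?G"
    apply (rule pos[where \<phi> = "\<lambda>v. [{5,6},{1,2},{3,4},{1,3},{2,4},{1,4},{2,3}] ! v"])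
    by (auto simp add: eval_nat_numeral upto_expand inj_on_def Int_insert_left doubleton_eq_iff d2a d2b)
  have n1: "1 \<notin> K_TJ ?G" by (rule no_k1[where u = 0 and v = 1]) auto
  have le: "k \<le> 2" if "k \<in> K_TJ ?G"
    by (rule negOct[where a = 1 and b = 2 and c = 3 and d = 5, OF _ _ _ _ _ _ _ _ _ _ _ _ that])
      (auto simp: eval_nat_numeral d2a d2b less_Suc_eq)
  show "k \<in> K_TJ ?G \<longleftrightarrow> k \<in> {2}"
  proof
    assume k: "k \<in> K_TJ ?G"
    then have "k \<ge> 1" unfolding K_TJ_def by simp
    moreover have "k \<noteq> 1" using k n1 by metis
    ultimately show "k \<in> {2}" using le[OF k] by simp
  next
    assume "k \<in> {2}"
    then show "k \<in> K_TJ ?G" using two unfolding K_TJ_def by simp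
  qed
qed

lemma negP: "n \<ge> 6 \<Longrightarrow> K_TJ (compl_graph (path_graph n)) = {}"
  by (rule negA[where a = 0 and b = 1 and x = 3 and y = 4 and z = 5]) auto

lemma negC: "n \<ge> 7 \<Longrightarrow> K_TJ (compl_graph (cycle_graph n)) = {}"
  by (rule negA[where a = 0 and b = 1 and x = 3 and y = 4 and z = 5]) auto

lemma negF: "p \<ge> 4 \<Longrightarrow> K_TJ (compl_graph (friendship_graph p)) = {}"
  by (rule negB[where a = 1 and b = 2 and X = "{3,4,5,6,7}"]) auto


theorem theorem4p10:
  shows "(\<forall>n\<ge>2. K_TJ (compl_graph (complete_graph n)) = {k. k \<ge> 2})
    \<and> (\<forall>n\<ge>1. K_TJ (compl_graph (complete_bipartite 1 n)) = {k. k \<ge> 2})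
    \<and> (\<forall>m n. 2 \<le> m \<and> m \<le> n \<longrightarrow> K_TJ (compl_graph (complete_bipartite m n)) = {k. k \<ge> 2})
    \<and> (\<forall>p\<ge>1. K_TJ (compl_graph (book_graph p)) = {k. k \<ge> 2})
    \<and> (\<forall>n. 3 \<le> n \<and> n \<le> 5 \<longrightarrow> K_TJ (compl_graph (path_graph n)) = {k. k \<ge> 2})
    \<and> (\<forall>n\<ge>6. K_TJ (compl_graph (path_graph n)) = {})
    \<and> (\<forall>n. 4 \<le> n \<and> n \<le> 6 \<longrightarrow> K_TJ (compl_graph (cycle_graph n)) = {k. k \<ge> 2})
    \<and> (\<forall>n\<ge>7. K_TJ (compl_graph (cycle_graph n)) = {})
    \<and> (\<forall>p\<in>{1,2}. K_TJ (compl_graph (friendship_graph p)) = {k. k \<ge> 2})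
    \<and> K_TJ (compl_graph (friendship_graph 3)) = {2}
    \<and> (\<forall>p\<ge>4. K_TJ (compl_graph (friendship_graph p)) = {})"
proof (intro conjI allI impI ballI)
  show "K_TJ (compl_graph (complete_graph n)) = {k. k \<ge> 2}" if "n \<ge> 2" for n using fam1 that .
  show "K_TJ (compl_graph (complete_bipartite 1 n)) = {k. k \<ge> 2}" if "n \<ge> 1" for n using fam2 that .
  show "K_TJ (compl_graph (complete_bipartite m n)) = {k. k \<ge> 2}" if "2 \<le> m \<and> m \<le> n" for m n
    using fam3 that by blast
  show "K_TJ (compl_graph (book_graph p)) = {k. k \<ge> 2}" if "p \<ge> 1" for p using fam4 that .
  show "K_TJ (compl_graph (path_graph n)) = {k. k \<ge> 2}" if "3 \<le> n \<and> n \<le> 5" for n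
  proof -
    have "n = 3 \<or> n = 4 \<or> n = 5" using that by arith
    then show ?thesis using famP3 famP4 famP5 by auto
  qed
  show "K_TJ (compl_graph (path_graph n)) = {}" if "n \<ge> 6" for n using negP that .
  show "K_TJ (compl_graph (cycle_graph n)) = {k. k \<ge> 2}" if "4 \<le> n \<and> n \<le> 6" for n
  proof -
    have "n = 4 \<or> n = 5 \<or> n = 6" using that by arith
    then show ?thesis using famC4 famC5 famC6 by auto
  qed
  show "K_TJ (compl_graph (cycle_graph n)) = {}" if "n \<ge> 7" for n using negC that .
  show "K_TJ (compl_graph (friendship_graph p)) = {k. k \<ge> 2}" if "p \<in> {1, 2}" for p
    using that famF1 famF2 by auto
  show "K_TJ (compl_graph (friendship_graph 3)) = {2}" by (rule famF3)
  show "K_TJ (compl_graph (friendship_graph p)) = {}" if "p \<ge> 4" for p using negF that .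
qed

end
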